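(* For $n\ge 2$ let $X^n$ be the continuous-time Markov chain on $V_n=\{v_0,\dots,v_{2n}\}$, $A=v_0$, $B=v_n$, $C=v_{2n}$, with nonzero jump rates $q(v_i,v_{i+1})=1$ for $0\le i\le 2n-1$, $i\neq n$; $q(B,v_{n+1})=1/n$, $q(B,C)=1-1/n$; $q(v_{i+1},v_i)=2^{-n^2}$ for $0\le i\le 2n-1$; $q(C,B)=(n-1)2^{-n^3}$. Let $\mathbb P^{n,A}$ denote the law of $X^n$ started at $A$ and $\tau$ the hitting time of $C$. Then \[ \lim_{n\to\infty} n\,\mathbb P^{n,A}(\tau>ns)=\begin{cases}\infty & \text{if } s<1,\\ 1 & \text{if } s\in(1,2),\\ 0 & \text{if } s>2.\end{cases} \]
   Context: The graph underlying $X^n$ is a path $v_0\cdots v_{2n}$ plus an extra edge $B$–$C$; transitions occur only along edges with the given rates. *)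

theory Defs
  imports Complex_Main
begin

text \<open>States v_0,...,v_{2n} are encoded as the naturals 0..2n; A = 0, B = n, C = 2n.\<close>

definition rate :: "nat \<Rightarrow> nat \<Rightarrow> nat \<Rightarrow> real" where
  "rate n i j =
     (if j = i + 1 \<and> i < 2*n then (if i = n then 1 / real n else 1) else 0)
   + (if i = j + 1 \<and> i \<le> 2*n then (1/2) ^ (n^2) else 0)
   + (if i = n \<and> j = 2*n then 1 - 1 / real n else 0)
   + (if i = 2*n \<and> j = n then (real n - 1) * (1/2) ^ (n^3) else 0)"

definition gen_stopped :: "nat \<Rightarrow> nat \<Rightarrow> nat \<Rightarrow> real" where
  "gen_stopped n i j =
     (if i = 2*n then 0
      else if i = j then - (\<Sum>l\<in>{..2*n} - {i}. rate n i l)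
      else rate n i j)"

fun matpow :: "(nat \<Rightarrow> nat \<Rightarrow> real) \<Rightarrow> nat \<Rightarrow> nat \<Rightarrow> nat \<Rightarrow> nat \<Rightarrow> real" where
  "matpow Q N 0 i j = (if i = j then 1 else 0)"
| "matpow Q N (Suc k) i j = (\<Sum>l\<le>N. matpow Q N k i l * Q l j)"

definition matexp :: "(nat \<Rightarrow> nat \<Rightarrow> real) \<Rightarrow> nat \<Rightarrow> real \<Rightarrow> nat \<Rightarrow> nat \<Rightarrow> real" where
  "matexp Q N t i j = (\<Sum>k. t ^ k / fact k * matpow Q N k i j)"

text \<open>P^{n,A}(tau > t), tau the hitting time of C: the chain stopped at C
  has not reached C at time t. For t < 0 this probability is 1.\<close>
definition surv :: "nat \<Rightarrow> real \<Rightarrow> real" where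
  "surv n t = 1 - matexp (gen_stopped n) (2*n) (max 0 t) 0 (2*n)"

end

theory Submission
  imports Defs
begin


lemma exp_sums_real: "(\<lambda>k. x^k / fact k) sums exp (x::real)"
  using exp_converges[of x] by (simp add: divide_inverse mult.commute)

lemma rs_prod:
  fixes B C :: "nat \<Rightarrow> nat \<Rightarrow> real"
  assumes "\<forall>l\<le>N. (\<Sum>j\<le>N. \<bar>C l j\<bar>) \<le> M"
  shows "(\<Sum>j\<le>N. \<bar>\<Sum>l\<le>N. B i l * C l j\<bar>) \<le> M * (\<Sum>l\<le>N. \<bar>B i l\<bar>)"
proof -
  have "(\<Sum>j\<le>N. \<bar>\<Sum>l\<le>N. B i l * C l j\<bar>) \<le> (\<Sum>j\<le>N. \<Sum>l\<le>N. \<bar>B i l\<bar> * \<bar>C l j\<bar>)"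
    by (intro sum_mono order_trans[OF sum_abs]) (simp add: abs_mult)
  also have "\<dots> = (\<Sum>l\<le>N. \<Sum>j\<le>N. \<bar>B i l\<bar> * \<bar>C l j\<bar>)"
    by (rule sum.swap)
  also have "\<dots> = (\<Sum>l\<le>N. \<bar>B i l\<bar> * (\<Sum>j\<le>N. \<bar>C l j\<bar>))"
    by (simp add: sum_distrib_left)
  also have "\<dots> \<le> (\<Sum>l\<le>N. \<bar>B i l\<bar> * M)"
    using assms by (intro sum_mono mult_left_mono) auto
  finally show ?thesis by (simp add: sum_distrib_left mult.commute)
qed

lemma rs_matpow:
  assumes "\<forall>l\<le>N. (\<Sum>j\<le>N. \<bar>A l j\<bar>) \<le> M" "i \<le> N"
  shows "(\<Sum>j\<le>N. \<bar>matpow A N k i j\<bar>) \<le> M^k"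
proof (induction k)
  case 0
  then show ?case using assms(2) by (simp add: if_distrib[of abs] sum.delta cong: if_cong)
next
  case (Suc k)
  have "(\<Sum>j\<le>N. \<bar>matpow A N (Suc k) i j\<bar>) \<le> M * (\<Sum>l\<le>N. \<bar>matpow A N k i l\<bar>)"
    using rs_prod[OF assms(1), of "matpow A N k" i] by simp
  also have "\<dots> \<le> M * M^k"
  proof -
    have "0 \<le> (\<Sum>j\<le>N. \<bar>A i j\<bar>)" by (simp add: sum_nonneg)
    moreover have "(\<Sum>j\<le>N. \<bar>A i j\<bar>) \<le> M" using assms by blast
    ultimately have "M \<ge> 0" by linarith
    then show ?thesis using Suc by (intro mult_left_mono) auto
  qed
  finally show ?case by simp
qed

lemma sum_abs_add: "(\<Sum>j\<in>S. \<bar>X j + Y j\<bar>) \<le> (\<Sum>j\<in>S. \<bar>X j\<bar>) + (\<Sum>j\<in>S. \<bar>Y j :: real\<bar>)"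
  by (simp add: sum.distrib[symmetric] sum_mono abs_triangle_ineq)

lemma matpow_diff:
  fixes A B :: "nat \<Rightarrow> nat \<Rightarrow> real"
  assumes A: "\<forall>l\<le>N. (\<Sum>j\<le>N. \<bar>A l j\<bar>) \<le> M" and B: "\<forall>l\<le>N. (\<Sum>j\<le>N. \<bar>B l j\<bar>) \<le> M"
    and D: "\<forall>l\<le>N. (\<Sum>j\<le>N. \<bar>A l j - B l j\<bar>) \<le> e" and M: "M \<ge> 1" and e: "e \<ge> 0" and i: "i \<le> N"
  shows "(\<Sum>j\<le>N. \<bar>matpow A N k i j - matpow B N k i j\<bar>) \<le> real k * e * M^k"
proof (induction k)
  case 0
  then show ?case by simp
next
  case (Suc k)
  have eq: "matpow A N (Suc k) i j - matpow B N (Suc k) i j =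
     (\<Sum>l\<le>N. (matpow A N k i l - matpow B N k i l) * A l j) + (\<Sum>l\<le>N. matpow B N k i l * (A l j - B l j))" for j
  proof -
    have "(\<Sum>l\<le>N. (matpow A N k i l - matpow B N k i l) * A l j) + (\<Sum>l\<le>N. matpow B N k i l * (A l j - B l j))
        = (\<Sum>l\<le>N. matpow A N k i l * A l j - matpow B N k i l * B l j)"
      unfolding sum.distrib[symmetric] by (rule sum.cong) (simp_all add: algebra_simps)
    also have "\<dots> = matpow A N (Suc k) i j - matpow B N (Suc k) i j" by (simp add: sum_subtractf)
    finally show ?thesis by simp
  qed
  have "(\<Sum>j\<le>N. \<bar>matpow A N (Suc k) i j - matpow B N (Suc k) i j\<bar>)
     \<le> (\<Sum>j\<le>N. \<bar>\<Sum>l\<le>N. (matpow A N k i l - matpow B N k i l) * A l j\<bar>) + (\<Sum>j\<le>N. \<bar>\<Sum>l\<le>N. matpow B N k i l * (A l j - B l j)\<bar>)"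
    unfolding eq by (rule sum_abs_add)
  also have "\<dots> \<le> M * (\<Sum>l\<le>N. \<bar>matpow A N k i l - matpow B N k i l\<bar>) + e * (\<Sum>l\<le>N. \<bar>matpow B N k i l\<bar>)"
    by (intro add_mono rs_prod[OF A, of "\<lambda>i l. matpow A N k i l - matpow B N k i l", simplified]
        rs_prod[of N "\<lambda>l j. A l j - B l j" e "matpow B N k" i, OF D])
  also have "\<dots> \<le> M * (real k * e * M^k) + e * M^k"
    using M e rs_matpow[OF B i, of k] Suc by (intro add_mono mult_left_mono) auto
  also have "\<dots> \<le> real (Suc k) * e * M^(Suc k)"
  proof -
    have "e * M^k \<le> e * M^(Suc k)" using M e
      by (intro mult_left_mono) (auto intro: power_increasing)
    then show ?thesis by (simp add: algebra_simps)
  qed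
  finally show ?case .
qed

lemma entry_le_rs: "j \<le> (N::nat) \<Longrightarrow> \<bar>f j\<bar> \<le> (\<Sum>j\<le>N. \<bar>f j :: real\<bar>)"
  using member_le_sum[of j "{..N}" "\<lambda>j. \<bar>f j\<bar>"] by simp

lemma matexp_abs_summable:
  assumes "\<forall>l\<le>N. (\<Sum>j\<le>N. \<bar>A l j\<bar>) \<le> M" "i \<le> N" "j \<le> N"
  shows "summable (\<lambda>k. \<bar>t^k / fact k * matpow A N k i j\<bar>)"
proof (rule summable_comparison_test'[where g = "\<lambda>k. (\<bar>t\<bar> * M)^k / fact k"])
  show "summable (\<lambda>k. (\<bar>t\<bar> * M)^k / fact k)" using exp_sums_real sums_summable by blast
  fix k
  have "\<bar>matpow A N k i j\<bar> \<le> M^k"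
    using entry_le_rs[OF assms(3), of "matpow A N k i"] rs_matpow[OF assms(1,2), of k] by linarith
  then show "norm \<bar>t^k / fact k * matpow A N k i j\<bar> \<le> (\<bar>t\<bar> * M)^k / fact k"
    by (simp add: abs_mult power_abs power_mult_distrib divide_simps)
       (metis abs_ge_zero mult.commute mult_left_mono zero_le_power)
qed

lemma matexp_diff:
  fixes A B :: "nat \<Rightarrow> nat \<Rightarrow> real"
  assumes A: "\<forall>l\<le>N. (\<Sum>j\<le>N. \<bar>A l j\<bar>) \<le> M" and B: "\<forall>l\<le>N. (\<Sum>j\<le>N. \<bar>B l j\<bar>) \<le> M"
    and D: "\<forall>l\<le>N. (\<Sum>j\<le>N. \<bar>A l j - B l j\<bar>) \<le> e" and M: "M \<ge> 1" and e: "e \<ge> 0" and i: "i \<le> N" and j: "j \<le> N"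
  shows "\<bar>matexp A N t i j - matexp B N t i j\<bar> \<le> e * exp (2 * M * \<bar>t\<bar>)"
proof -
  let ?a = "\<lambda>k. t^k / fact k * matpow A N k i j" and ?b = "\<lambda>k. t^k / fact k * matpow B N k i j"
  have sa: "summable ?a" by (rule summable_rabs_cancel[OF matexp_abs_summable[OF A i j]])
  have sb: "summable ?b" by (rule summable_rabs_cancel[OF matexp_abs_summable[OF B i j]])
  have g: "(\<lambda>k. e * ((2 * M * \<bar>t\<bar>)^k / fact k)) sums (e * exp (2 * M * \<bar>t\<bar>))"
    by (intro sums_mult exp_sums_real)
  have bnd: "\<bar>?a k - ?b k\<bar> \<le> e * ((2 * M * \<bar>t\<bar>)^k / fact k)" for k
  proof -
    have "?a k - ?b k = t^k / fact k * (matpow A N k i j - matpow B N k i j)"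
      by (simp add: algebra_simps)
    then have "\<bar>?a k - ?b k\<bar> = \<bar>t\<bar>^k / fact k * \<bar>matpow A N k i j - matpow B N k i j\<bar>"
      by (simp add: abs_mult power_abs)
    also have "\<dots> \<le> \<bar>t\<bar>^k / fact k * (real k * e * M^k)"
      using entry_le_rs[OF j, of "\<lambda>j. matpow A N k i j - matpow B N k i j"] matpow_diff[OF A B D M e i, of k]
      by (intro mult_left_mono) auto
    also have "\<dots> \<le> \<bar>t\<bar>^k / fact k * (2^k * e * M^k)"
      using of_nat_less_two_power[of k, where 'a=real] e M
      by (intro mult_left_mono mult_right_mono) auto
    also have "\<dots> = e * ((2 * M * \<bar>t\<bar>)^k / fact k)"
      by (simp add: power_mult_distrib)
    finally show ?thesis .
  qed
  have sd: "summable (\<lambda>k. \<bar>?a k - ?b k\<bar>)"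
  proof (rule summable_comparison_test'[OF sums_summable[OF g]])
    fix k show "norm \<bar>?a k - ?b k\<bar> \<le> e * ((2 * M * \<bar>t\<bar>)^k / fact k)"
      using bnd[of k] by (simp only: real_norm_def abs_abs)
  qed
  have eq: "matexp A N t i j - matexp B N t i j = (\<Sum>k. ?a k - ?b k)"
    unfolding matexp_def by (rule suminf_diff[OF sa sb])
  have "\<bar>\<Sum>k. ?a k - ?b k\<bar> \<le> (\<Sum>k. \<bar>?a k - ?b k\<bar>)"
    by (rule summable_rabs[OF sd])
  also have "\<dots> \<le> e * exp (2 * M * \<bar>t\<bar>)"
    by (rule sums_le[OF _ summable_sums[OF sd] g]) (use bnd in blast)
  finally show ?thesis unfolding eq .
qed



lemma binom_step:
  fixes X :: "nat \<Rightarrow> real"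
  shows "(\<Sum>i\<le>k. real (k choose i) * (-1)^(k-i) * X (Suc i)) - (\<Sum>i\<le>k. real (k choose i) * (-1)^(k-i) * X i)
       = (\<Sum>i\<le>Suc k. real (Suc k choose i) * (-1)^(Suc k - i) * X i)"
proof -
  have r1: "(\<Sum>i\<le>Suc k. real (Suc k choose i) * (-1)^(Suc k - i) * X i)
     = (-1)^(Suc k) * X 0 + (\<Sum>i\<le>k. real (k choose i) * (-1)^(k-i) * X (Suc i))
       + (\<Sum>i\<le>k. real (k choose Suc i) * (-1)^(k-i) * X (Suc i))"
    by (simp add: sum.atMost_Suc_shift sum.distrib[symmetric] algebra_simps del: sum.atMost_Suc)
  have r2: "(\<Sum>i\<le>k. real (k choose i) * (-1)^(k-i) * X i)
      = (\<Sum>i\<le>Suc k. real (k choose i) * (-1)^(k-i) * X i)"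
    by simp
  also have "\<dots> = (-1)^k * X 0 + (\<Sum>i\<le>k. real (k choose Suc i) * (-1)^(k - Suc i) * X (Suc i))"
    by (simp add: sum.atMost_Suc_shift del: sum.atMost_Suc)
  also have "(\<Sum>i\<le>k. real (k choose Suc i) * (-1)^(k - Suc i) * X (Suc i))
      = - (\<Sum>i\<le>k. real (k choose Suc i) * (-1)^(k - i) * X (Suc i))"
  proof -
    have "real (k choose Suc i) * (-1)^(k - Suc i) * X (Suc i) = - (real (k choose Suc i) * (-1)^(k - i) * X (Suc i))"
      if "i \<le> k" for i
    proof (cases "i < k")
      case True
      then have "k - i = Suc (k - Suc i)" by simp
      then show ?thesis by simp
    next
      case False
      then show ?thesis using that by simp
    qed
    then show ?thesis by (simp add: sum_negf[symmetric])
  qed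
  finally show ?thesis using r1 by simp
qed

lemma matpow_shift:
  fixes A :: "nat \<Rightarrow> nat \<Rightarrow> real"
  shows "j \<le> N \<Longrightarrow> matpow (\<lambda>a b. A a b - (if a = b then 1 else 0)) N k r j
     = (\<Sum>i\<le>k. real (k choose i) * (-1)^(k-i) * matpow A N i r j)"
proof (induction k arbitrary: j)
  case 0
  then show ?case by simp
next
  case (Suc k)
  let ?c = "\<lambda>i. real (k choose i) * (-1)^(k-i)"
  have "matpow (\<lambda>a b. A a b - (if a = b then 1 else 0)) N (Suc k) r j
     = (\<Sum>l\<le>N. (\<Sum>i\<le>k. ?c i * matpow A N i r l) * (A l j - (if l = j then 1 else 0)))"
    using Suc.IH by simp
  also have "\<dots> = (\<Sum>l\<le>N. \<Sum>i\<le>k. ?c i * matpow A N i r l * A l j) - (\<Sum>l\<le>N. (if l = j then (\<Sum>i\<le>k. ?c i * matpow A N i r l) else 0))"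
  proof -
    have "(\<Sum>i\<le>k. ?c i * matpow A N i r l) * (A l j - (if l = j then 1 else 0))
      = (\<Sum>i\<le>k. ?c i * matpow A N i r l * A l j) - (if l = j then (\<Sum>i\<le>k. ?c i * matpow A N i r l) else 0)" for l
      by (simp add: sum_distrib_right right_diff_distrib)
    then show ?thesis by (simp only: sum_subtractf[symmetric])
  qed
  also have "(\<Sum>l\<le>N. (if l = j then (\<Sum>i\<le>k. ?c i * matpow A N i r l) else 0)) = (\<Sum>i\<le>k. ?c i * matpow A N i r j)"
    using Suc.prems by simp
  also have "(\<Sum>l\<le>N. \<Sum>i\<le>k. ?c i * matpow A N i r l * A l j) = (\<Sum>i\<le>k. \<Sum>l\<le>N. ?c i * matpow A N i r l * A l j)"
    by (rule sum.swap)
  also have "\<dots> = (\<Sum>i\<le>k. ?c i * matpow A N (Suc i) r j)"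
    by (simp add: sum_distrib_left mult.assoc)
  also have "(\<Sum>i\<le>k. ?c i * matpow A N (Suc i) r j) - (\<Sum>i\<le>k. ?c i * matpow A N i r j)
      = (\<Sum>i\<le>Suc k. real (Suc k choose i) * (-1)^(Suc k - i) * matpow A N i r j)"
    by (rule binom_step)
  finally show ?case .
qed

lemma exp_neg_sums: "(\<lambda>k. (-t)^k / fact k) sums exp (-t::real)"
  by (rule exp_sums_real)

lemma matexp_shift:
  fixes A :: "nat \<Rightarrow> nat \<Rightarrow> real"
  assumes A: "\<forall>l\<le>N. (\<Sum>j\<le>N. \<bar>A l j\<bar>) \<le> M" and r: "r \<le> N" and j: "j \<le> N"
  shows "matexp (\<lambda>a b. A a b - (if a = b then 1 else 0)) N t r j = exp (-t) * matexp A N t r j"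
proof -
  let ?a = "\<lambda>i. t^i / fact i * matpow A N i r j" and ?b = "\<lambda>m. (-t)^m / fact m"
  have sa: "summable (\<lambda>k. norm (?a k))" using matexp_abs_summable[OF A r j] by simp
  have sb: "summable (\<lambda>k. norm (?b k))"
  proof -
    have "summable (\<lambda>k. \<bar>t\<bar>^k / fact k)" using exp_sums_real sums_summable by blast
    moreover have "norm (?b k) = \<bar>t\<bar>^k / fact k" for k by (simp add: power_abs)
    ultimately show ?thesis by simp
  qed
  have C: "(\<lambda>k. \<Sum>i\<le>k. ?a i * ?b (k - i)) sums ((\<Sum>k. ?a k) * (\<Sum>k. ?b k))"
    by (rule Cauchy_product_sums[OF sa sb])
  have trm: "t^i / fact i * X * ((-t)^(k-i) / fact (k-i)) = t^k / fact k * (real (k choose i) * (-1)^(k-i) * X)"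
    if "i \<le> k" for i k and X :: real
  proof -
    have "real (k choose i) = fact k / (fact i * fact (k-i))" using binomial_fact[OF that] by simp
    moreover have "t^k = t^i * t^(k-i)" using that by (simp add: power_add[symmetric])
    moreover have "(-t)^(k-i) = (-1)^(k-i) * t^(k-i)" by (rule power_minus)
    ultimately show ?thesis by (simp add: field_simps)
  qed
  have feq: "(\<lambda>k. \<Sum>i\<le>k. ?a i * ?b (k - i)) = (\<lambda>k. t^k / fact k * matpow (\<lambda>a b. A a b - (if a = b then 1 else 0)) N k r j)"
  proof
    fix k
    have "(\<Sum>i\<le>k. ?a i * ?b (k - i)) = (\<Sum>i\<le>k. t^k / fact k * (real (k choose i) * (-1)^(k-i) * matpow A N i r j))"
      by (rule sum.cong[OF refl], rule trm) simp
    also have "\<dots> = t^k / fact k * matpow (\<lambda>a b. A a b - (if a = b then 1 else 0)) N k r j"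
      by (simp add: matpow_shift[OF j] sum_distrib_left)
    finally show "(\<Sum>i\<le>k. ?a i * ?b (k - i)) = t^k / fact k * matpow (\<lambda>a b. A a b - (if a = b then 1 else 0)) N k r j" .
  qed
  have bsum: "(\<Sum>k. ?b k) = exp (-t)" by (rule sums_unique[symmetric, OF exp_neg_sums])
  have asum: "(\<Sum>k. ?a k) = matexp A N t r j" by (simp add: matexp_def)
  have "(\<lambda>k. t^k / fact k * matpow (\<lambda>a b. A a b - (if a = b then 1 else 0)) N k r j) sums (matexp A N t r j * exp (-t))"
    using C unfolding feq bsum asum .
  then show ?thesis unfolding matexp_def by (simp add: sums_iff mult.commute)
qed



definition fwd :: "nat \<Rightarrow> nat \<Rightarrow> nat \<Rightarrow> real" where
"fwd n i j = (if i < 2*n \<and> i \<noteq> n then (if j = Suc i then 1 else 0)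
   else if i = n then (if j = Suc n then 1/real n else 0) + (if j = 2*n then 1 - 1/real n else 0)
   else if i = 2*n then (if j = 2*n then 1 else 0) else 0)"

definition bk :: "nat \<Rightarrow> nat \<Rightarrow> nat \<Rightarrow> real" where
"bk n i j = (if 0 < i \<and> j = i - 1 then (1/2)^(n^2) else 0)"

lemma fwd_nonneg: "n \<ge> 1 \<Longrightarrow> fwd n i j \<ge> 0"
  by (auto simp: fwd_def field_simps)

lemma fwd_sum: assumes "n \<ge> 2" "i \<le> 2*n" shows "(\<Sum>l\<le>2*n. fwd n i l) = 1"
proof -
  consider "i < 2*n \<and> i \<noteq> n" | "i = n" | "i = 2*n" using assms by linarith
  then show ?thesis
  proof cases
    case 1 then show ?thesis by (simp add: fwd_def)
  next
    case 2 then show ?thesis using assms by (simp add: fwd_def sum.distrib)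
  next
    case 3 then show ?thesis using assms by (simp add: fwd_def)
  qed
qed

lemma fwd_diag: "n \<ge> 2 \<Longrightarrow> i < 2*n \<Longrightarrow> fwd n i i = 0"
  by (simp add: fwd_def)

lemma bk_sum: assumes "i \<le> 2*n" shows "(\<Sum>l\<le>2*n. bk n i l) = (if 0 < i then (1/2)^(n^2) else 0)"
  using assms by (auto simp: bk_def)

lemma bk_diag: "bk n i i = 0" by (auto simp: bk_def)

lemma rate_split: assumes "n \<ge> 2" "i < 2*n" shows "rate n i l = fwd n i l + bk n i l"
proof -
  have c2: "(i = l+1 \<and> i \<le> 2*n) = (0 < i \<and> l = i - 1)" using assms by arith
  have c4: "\<not>(i = 2*n \<and> l = n)" using assms by simp
  have h: "(if l = i + 1 \<and> i < 2*n then (if i = n then 1 / real n else 1) else 0)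
      + (if i = n \<and> l = 2*n then 1 - 1 / real n else 0) = fwd n i l"
    using assms by (cases "i = n") (simp_all add: fwd_def)
  have r: "rate n i l = (if l = i + 1 \<and> i < 2*n then (if i = n then 1 / real n else 1) else 0)
     + (if 0 < i \<and> l = i - 1 then (1/2)^(n^2) else 0)
     + (if i = n \<and> l = 2*n then 1 - 1 / real n else 0)
     + (if i = 2*n \<and> l = n then (real n - 1) * (1/2)^(n^3) else 0)"
    by (simp only: rate_def c2)
  have t4: "(if i = 2*n \<and> l = n then (real n - 1) * (1/2::real)^(n^3) else 0) = 0" by (rule if_not_P[OF c4])
  have b: "bk n i l = (if 0 < i \<and> l = i - 1 then (1/2)^(n^2) else 0)" by (simp only: bk_def)
  show ?thesis using r t4 h b by linarith
qed

lemma gen_diff: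
  assumes n: "n \<ge> 2" and i: "i \<le> 2*n" and j: "j \<le> 2*n"
  shows "gen_stopped n i j - (fwd n i j - (if i = j then 1 else 0))
       = (if i = 2*n then 0 else bk n i j + (if j = i then - (if 0 < i then (1/2)^(n^2) else 0) else 0))"
proof (cases "i = 2*n")
  case True
  then show ?thesis by (simp add: gen_stopped_def fwd_def)
next
  case False
  then have i': "i < 2*n" using i by simp
  show ?thesis
  proof (cases "j = i")
    case True
    have "(\<Sum>l\<in>{..2*n} - {i}. rate n i l) = (\<Sum>l\<in>{..2*n} - {i}. fwd n i l + bk n i l)"
      using rate_split[OF n i'] by simp
    also have "\<dots> = (\<Sum>l\<le>2*n. fwd n i l + bk n i l)"
      using i by (simp add: sum_diff1 fwd_diag[OF n i'] bk_diag)
    also have "\<dots> = 1 + (if 0 < i then (1/2)^(n^2) else 0)"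
      using fwd_sum[OF n i] bk_sum[OF i] by (simp add: sum.distrib)
    finally show ?thesis using True False fwd_diag[OF n i'] bk_diag
      by (simp add: gen_stopped_def)
  next
    case False
    then show ?thesis using \<open>i \<noteq> 2*n\<close> rate_split[OF n i'] by (simp add: gen_stopped_def)
  qed
qed

lemma rows_D:
  assumes n: "n \<ge> 2" and i: "i \<le> 2*n"
  shows "(\<Sum>j\<le>2*n. \<bar>gen_stopped n i j - (fwd n i j - (if i = j then 1 else 0))\<bar>) \<le> 2 * (1/2)^(n^2)"
proof (cases "i = 2*n")
  case True
  then show ?thesis using gen_diff[OF n i] by simp
next
  case False
  have "(\<Sum>j\<le>2*n. \<bar>gen_stopped n i j - (fwd n i j - (if i = j then 1 else 0))\<bar>)
      = (\<Sum>j\<le>2*n. bk n i j + (if j = i then (if 0 < i then (1/2)^(n^2) else 0) else 0))"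
    using False gen_diff[OF n i] by (intro sum.cong refl) (auto simp: bk_def)
  also have "\<dots> = 2 * (if 0 < i then (1/2)^(n^2) else 0)"
    using i by (simp add: sum.distrib bk_sum)
  also have "\<dots> \<le> 2 * (1/2)^(n^2)" by simp
  finally show ?thesis .
qed

lemma rows_fwd:
  assumes n: "n \<ge> 2" and i: "i \<le> 2*n"
  shows "(\<Sum>j\<le>2*n. \<bar>fwd n i j\<bar>) \<le> 1"
  using fwd_sum[OF n i] fwd_nonneg[of n i] n by simp

lemma rows_Q0:
  assumes n: "n \<ge> 2" and i: "i \<le> 2*n"
  shows "(\<Sum>j\<le>2*n. \<bar>fwd n i j - (if i = j then 1 else 0)\<bar>) \<le> 2"
proof -
  have "(\<Sum>j\<le>2*n. \<bar>fwd n i j - (if i = j then 1 else 0)\<bar>) \<le> (\<Sum>j\<le>2*n. fwd n i j + (if i = j then 1 else 0))"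
    using fwd_nonneg[of n i] n by (intro sum_mono) (auto simp: abs_if)
  also have "\<dots> = 2" using fwd_sum[OF n i] i by (simp add: sum.distrib)
  finally show ?thesis .
qed

lemma rows_gen:
  assumes n: "n \<ge> 2" and i: "i \<le> 2*n"
  shows "(\<Sum>j\<le>2*n. \<bar>gen_stopped n i j\<bar>) \<le> 3"
proof -
  have "(\<Sum>j\<le>2*n. \<bar>gen_stopped n i j\<bar>) \<le>
     (\<Sum>j\<le>2*n. \<bar>gen_stopped n i j - (fwd n i j - (if i = j then 1 else 0))\<bar> + \<bar>fwd n i j - (if i = j then 1 else 0)\<bar>)"
    by (intro sum_mono) linarith
  also have "\<dots> \<le> 2 * (1/2)^(n^2) + 2"
    unfolding sum.distrib using rows_D[OF n i] rows_Q0[OF n i] by linarith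
  also have "(1/2::real)^(n^2) \<le> 1/2"
  proof -
    have "n^2 \<ge> 1" using n by simp
    then show ?thesis using power_decreasing[of 1 "n^2" "1/2::real"] by simp
  qed
  then have "2 * (1/2::real)^(n^2) + 2 \<le> 3" by linarith
  finally show ?thesis .
qed

lemma approx:
  assumes n: "n \<ge> 2"
  shows "\<bar>matexp (gen_stopped n) (2*n) t 0 (2*n) - exp (-t) * matexp (fwd n) (2*n) t 0 (2*n)\<bar>
     \<le> 2 * (1/2)^(n^2) * exp (6 * \<bar>t\<bar>)"
proof -
  have "\<bar>matexp (gen_stopped n) (2*n) t 0 (2*n) - matexp (\<lambda>a b. fwd n a b - (if a = b then 1 else 0)) (2*n) t 0 (2*n)\<bar>
     \<le> 2 * (1/2)^(n^2) * exp (2 * 3 * \<bar>t\<bar>)"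
  proof (rule matexp_diff)
    show "\<forall>l\<le>2*n. (\<Sum>j\<le>2*n. \<bar>fwd n l j - (if l = j then 1 else 0)\<bar>) \<le> 3"
    proof (intro allI impI)
      fix l assume "l \<le> 2*n"
      from rows_Q0[OF n this] show "(\<Sum>j\<le>2*n. \<bar>fwd n l j - (if l = j then 1 else 0)\<bar>) \<le> 3" by linarith
    qed
  qed (use rows_gen[OF n] rows_D[OF n] in auto)
  moreover have "matexp (\<lambda>a b. fwd n a b - (if a = b then 1 else 0)) (2*n) t 0 (2*n) = exp (-t) * matexp (fwd n) (2*n) t 0 (2*n)"
    by (rule matexp_shift[where M = 1]) (use rows_fwd[OF n] in auto)
  ultimately show ?thesis by simp
qed



definition rrow :: "nat \<Rightarrow> nat \<Rightarrow> nat \<Rightarrow> real" where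
"rrow n k m = (if k \<le> n then (if m = k then 1 else 0)
   else if k < 2*n then (if m = k then 1/real n else 0) + (if m = 2*n then 1 - 1/real n else 0)
   else (if m = 2*n then 1 else 0))"

lemma sum_delta_mult: "c \<le> (N::nat) \<Longrightarrow> (\<Sum>l\<le>N. (if l = c then x else 0) * f l) = x * (f c :: real)"
proof -
  assume "c \<le> N"
  have "(\<Sum>l\<le>N. (if l = c then x else 0) * f l) = (\<Sum>l\<le>N. (if l = c then x * f c else 0))"
    by (intro sum.cong refl) simp
  also have "\<dots> = x * f c" using \<open>c \<le> N\<close> by simp
  finally show ?thesis .
qed

lemma fwd_pow:
  assumes n: "n \<ge> 2"
  shows "m \<le> 2*n \<Longrightarrow> matpow (fwd n) (2*n) k 0 m = rrow n k m"
proof (induction k arbitrary: m)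
  case 0
  then show ?case by (simp add: rrow_def)
next
  case (Suc k)
  have "matpow (fwd n) (2*n) (Suc k) 0 m = (\<Sum>l\<le>2*n. rrow n k l * fwd n l m)"
    using Suc.IH by simp
  also have "\<dots> = rrow n (Suc k) m"
  proof -
    consider "k < n" | "k = n" | "n < k \<and> Suc k < 2*n" | "n < k \<and> Suc k = 2*n" | "2*n \<le> k" by linarith
    then show ?thesis
    proof cases
      case 1
      have "(\<Sum>l\<le>2*n. rrow n k l * fwd n l m) = (\<Sum>l\<le>2*n. (if l = k then 1 else 0) * fwd n l m)"
        using 1 by (simp add: rrow_def)
      also have "\<dots> = fwd n k m" using 1 by (subst sum_delta_mult) auto
      finally show ?thesis using 1 n by (simp add: rrow_def fwd_def)
    next
      case 2
      have "(\<Sum>l\<le>2*n. rrow n k l * fwd n l m) = (\<Sum>l\<le>2*n. (if l = k then 1 else 0) * fwd n l m)"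
        using 2 by (simp add: rrow_def)
      also have "\<dots> = fwd n k m" using 2 by (subst sum_delta_mult) auto
      finally show ?thesis using 2 n by (simp add: rrow_def fwd_def)
    next
      case 3
      have "(\<Sum>l\<le>2*n. rrow n k l * fwd n l m) = (\<Sum>l\<le>2*n. (if l = k then 1/real n else 0) * fwd n l m)
          + (\<Sum>l\<le>2*n. (if l = 2*n then 1 - 1/real n else 0) * fwd n l m)"
        using 3 by (simp add: rrow_def sum.distrib[symmetric] distrib_right)
      also have "\<dots> = 1/real n * fwd n k m + (1 - 1/real n) * fwd n (2*n) m"
        using 3 by (simp add: sum_delta_mult)
      finally show ?thesis using 3 n by (simp add: rrow_def fwd_def)
    next
      case 4
      have "(\<Sum>l\<le>2*n. rrow n k l * fwd n l m) = (\<Sum>l\<le>2*n. (if l = k then 1/real n else 0) * fwd n l m)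
          + (\<Sum>l\<le>2*n. (if l = 2*n then 1 - 1/real n else 0) * fwd n l m)"
        using 4 by (simp add: rrow_def sum.distrib[symmetric] distrib_right)
      also have "\<dots> = 1/real n * fwd n k m + (1 - 1/real n) * fwd n (2*n) m"
        using 4 by (simp add: sum_delta_mult)
      also have "\<dots> = (if m = 2*n then 1 else 0)"
        using 4 n by (simp add: fwd_def)
      finally show ?thesis using 4 n by (simp add: rrow_def)
    next
      case 5
      have "(\<Sum>l\<le>2*n. rrow n k l * fwd n l m) = (\<Sum>l\<le>2*n. (if l = 2*n then 1 else 0) * fwd n l m)"
        using 5 n by (simp add: rrow_def)
      also have "\<dots> = fwd n (2*n) m" by (subst sum_delta_mult) auto
      finally show ?thesis using 5 n by (simp add: rrow_def fwd_def)
    qed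
  qed
  finally show ?case .
qed

lemma rrow_end: "n \<ge> 2 \<Longrightarrow> rrow n k (2*n) = (if k \<le> n then 0 else if k < 2*n then 1 - 1/real n else 1)"
  by (simp add: rrow_def)

definition Fsum :: "nat \<Rightarrow> real \<Rightarrow> real" where
"Fsum n t = (\<Sum>k<2*n. t^k / fact k * (1 - rrow n k (2*n)))"

lemma key_identity:
  assumes n: "n \<ge> 2"
  shows "exp (-t) * matexp (fwd n) (2*n) t 0 (2*n) = 1 - exp (-t) * Fsum n t"
proof -
  have f: "(\<lambda>k. t^k / fact k * (1 - rrow n k (2*n))) sums Fsum n t"
    unfolding Fsum_def by (rule sums_finite) (use n in \<open>auto simp: rrow_end\<close>)
  have "(\<lambda>k. t^k / fact k - t^k / fact k * (1 - rrow n k (2*n))) sums (exp t - Fsum n t)"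
    by (rule sums_diff[OF exp_sums_real f])
  moreover have "(\<lambda>k. t^k / fact k - t^k / fact k * (1 - rrow n k (2*n))) = (\<lambda>k. t^k / fact k * matpow (fwd n) (2*n) k 0 (2*n))"
    using fwd_pow[OF n, of "2*n"] by (simp add: algebra_simps)
  ultimately have "matexp (fwd n) (2*n) t 0 (2*n) = exp t - Fsum n t"
    unfolding matexp_def by (simp add: sums_iff)
  then show ?thesis by (simp add: right_diff_distrib exp_minus_inverse mult.commute[of "exp (-t)"])
qed

lemma coef_bounds:
  assumes n: "n \<ge> 2" and k: "k < 2*n"
  shows "1/real n \<le> 1 - rrow n k (2*n)" "1 - rrow n k (2*n) \<le> 1"
    "1 - rrow n k (2*n) \<le> (if k < Suc n then 1 else 0) + 1/real n"
    "(if k < Suc n then 1 else 0) \<le> 1 - rrow n k (2*n)"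
  using assms by (auto simp: rrow_end)

lemma sum_filter_lt:
  assumes "m \<le> (M::nat)"
  shows "(\<Sum>k<M. (if k < m then x k else 0)) = (\<Sum>k<m. (x k :: real))"
proof -
  have "{k \<in> {..<M}. k < m} = {..<m}" using assms by auto
  then show ?thesis using sum.inter_filter[of "{..<M}" x "\<lambda>k. k < m"] by simp
qed

lemma F_bounds:
  assumes n: "n \<ge> 2" and t: "t \<ge> 0"
  shows "(\<Sum>k<Suc n. t^k / fact k) \<le> Fsum n t"
    "1/real n * (\<Sum>k<2*n. t^k / fact k) \<le> Fsum n t"
    "Fsum n t \<le> (\<Sum>k<2*n. t^k / fact k)"
    "Fsum n t \<le> (\<Sum>k<Suc n. t^k / fact k) + 1/real n * (\<Sum>k<2*n. t^k / fact k)"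
proof -
  have x: "0 \<le> t^k / fact k" for k using t by simp
  have sn: "Suc n \<le> 2*n" using n by simp
  have "(\<Sum>k<Suc n. t^k / fact k) = (\<Sum>k<2*n. (if k < Suc n then 1 else 0) * (t^k / fact k))"
  proof -
    have "(if k < Suc n then 1 else 0) * (t^k / fact k) = (if k < Suc n then t^k / fact k else 0)" for k by simp
    then show ?thesis using sum_filter_lt[OF sn, of "\<lambda>k. t^k / fact k"] by presburger
  qed
  also have "\<dots> \<le> Fsum n t" unfolding Fsum_def
  proof (intro sum_mono)
    fix k assume "k \<in> {..<2*n}"
    then have c: "(if k < Suc n then 1 else 0) \<le> 1 - rrow n k (2*n)" using coef_bounds(4)[OF n] by simp
    show "(if k < Suc n then 1 else 0) * (t^k / fact k) \<le> t^k / fact k * (1 - rrow n k (2*n))"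
      using mult_right_mono[OF c x[of k]] by (metis mult.commute)
  qed
  finally show "(\<Sum>k<Suc n. t^k / fact k) \<le> Fsum n t" .
  show "1/real n * (\<Sum>k<2*n. t^k / fact k) \<le> Fsum n t" unfolding Fsum_def sum_distrib_left
  proof (intro sum_mono)
    fix k assume "k \<in> {..<2*n}"
    then have c: "1/real n \<le> 1 - rrow n k (2*n)" using coef_bounds(1)[OF n] by simp
    show "1/real n * (t^k / fact k) \<le> t^k / fact k * (1 - rrow n k (2*n))"
      using mult_right_mono[OF c x[of k]] by (metis mult.commute)
  qed
  show "Fsum n t \<le> (\<Sum>k<2*n. t^k / fact k)" unfolding Fsum_def
  proof (intro sum_mono)
    fix k assume "k \<in> {..<2*n}"
    then have c: "1 - rrow n k (2*n) \<le> 1" using coef_bounds(2)[OF n] by simp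
    show "t^k / fact k * (1 - rrow n k (2*n)) \<le> t^k / fact k"
      using mult_left_mono[OF c x[of k]] by simp
  qed
  have "Fsum n t \<le> (\<Sum>k<2*n. (t^k / fact k) * ((if k < Suc n then 1 else 0) + 1/real n))" unfolding Fsum_def
  proof (intro sum_mono)
    fix k assume "k \<in> {..<2*n}"
    then have c: "1 - rrow n k (2*n) \<le> (if k < Suc n then 1 else 0) + 1/real n" using coef_bounds(3)[OF n] by simp
    show "t^k / fact k * (1 - rrow n k (2*n)) \<le> (t^k / fact k) * ((if k < Suc n then 1 else 0) + 1/real n)"
      using mult_left_mono[OF c x[of k]] by simp
  qed
  also have "\<dots> = (\<Sum>k<2*n. (if k < Suc n then t^k / fact k else 0)) + 1/real n * (\<Sum>k<2*n. t^k / fact k)"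
  proof -
    have "(t^k / fact k) * ((if k < Suc n then 1 else 0) + 1/real n) = (if k < Suc n then t^k / fact k else 0) + 1/real n * (t^k / fact k)" for k
      by (simp add: algebra_simps)
    then show ?thesis by (simp only: sum.distrib sum_distrib_left)
  qed
  also have "\<dots> = (\<Sum>k<Suc n. t^k / fact k) + 1/real n * (\<Sum>k<2*n. t^k / fact k)"
    using sum_filter_lt[OF sn, of "\<lambda>k. t^k / fact k"] by simp
  finally show "Fsum n t \<le> (\<Sum>k<Suc n. t^k / fact k) + 1/real n * (\<Sum>k<2*n. t^k / fact k)" .
qed



lemma psum_le_exp: "x \<ge> 0 \<Longrightarrow> (\<Sum>k<m. x^k / fact k) \<le> exp (x::real)"
  using sum_le_suminf[OF sums_summable[OF exp_sums_real[of x]], of "{..<m}"] sums_unique[OF exp_sums_real[of x]]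
  by simp

lemma chern_low:
  fixes t \<theta> :: real
  assumes th: "0 < \<theta>" "\<theta> \<le> 1" and t: "t \<ge> 0"
  shows "exp (-t) * (\<Sum>k<m. t^k / fact k) \<le> exp (t * (\<theta> - 1)) / \<theta>^m"
proof -
  have "(\<Sum>k<m. t^k / fact k) \<le> (\<Sum>k<m. (t*\<theta>)^k / fact k / \<theta>^m)"
  proof (intro sum_mono)
    fix k assume "k \<in> {..<m}"
    then have "\<theta>^m \<le> \<theta>^k" using th by (intro power_decreasing) auto
    then have "1 \<le> \<theta>^k / \<theta>^m" using th by simp
    then have "t^k / fact k * 1 \<le> t^k / fact k * (\<theta>^k / \<theta>^m)" using t by (intro mult_left_mono) auto
    then show "t^k / fact k \<le> (t*\<theta>)^k / fact k / \<theta>^m" by (simp add: power_mult_distrib)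
  qed
  also have "\<dots> = (\<Sum>k<m. (t*\<theta>)^k / fact k) / \<theta>^m" by (simp add: sum_divide_distrib)
  also have "\<dots> \<le> exp (t*\<theta>) / \<theta>^m"
    using th t by (intro divide_right_mono psum_le_exp) auto
  finally have "exp (-t) * (\<Sum>k<m. t^k / fact k) \<le> exp (-t) * (exp (t*\<theta>) / \<theta>^m)"
    by (intro mult_left_mono) auto
  also have "\<dots> = exp (t * (\<theta> - 1)) / \<theta>^m" by (simp add: exp_add[symmetric] algebra_simps)
  finally show ?thesis .
qed

lemma chern_up:
  fixes t \<theta> :: real
  assumes th: "1 \<le> \<theta>" and t: "t \<ge> 0"
  shows "1 - exp (-t) * (\<Sum>k<m. t^k / fact k) \<le> exp (t * (\<theta> - 1)) / \<theta>^m"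
proof -
  let ?x = "\<lambda>k. t^k / fact k" and ?y = "\<lambda>k. (t*\<theta>)^k / fact k"
  have sx: "summable ?x" using exp_sums_real sums_summable by blast
  have sy: "summable ?y" using exp_sums_real sums_summable by blast
  have ex: "exp t = (\<Sum>j. ?x (j + m)) + (\<Sum>k<m. ?x k)"
    using suminf_split_initial_segment[OF sx, of m] sums_unique[OF exp_sums_real[of t]] by simp
  have ey: "exp (t*\<theta>) = (\<Sum>j. ?y (j + m)) + (\<Sum>k<m. ?y k)"
    using suminf_split_initial_segment[OF sy, of m] sums_unique[OF exp_sums_real[of "t*\<theta>"]] by simp
  have py: "0 \<le> (\<Sum>k<m. ?y k)" using t th by (intro sum_nonneg) auto
  have sx': "summable (\<lambda>j. ?x (j + m))" using summable_ignore_initial_segment[OF sx] .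
  have sy': "summable (\<lambda>j. ?y (j + m) / \<theta>^m)" using summable_divide[OF summable_ignore_initial_segment[OF sy]] .
  have "(\<Sum>j. ?x (j + m)) \<le> (\<Sum>j. ?y (j + m) / \<theta>^m)"
  proof (rule suminf_le[OF _ sx' sy'])
    fix j
    have "\<theta>^m \<le> \<theta>^(j+m)" using th by (intro power_increasing) auto
    then have "1 \<le> \<theta>^(j+m) / \<theta>^m" using th by simp
    then have "?x (j+m) * 1 \<le> ?x (j+m) * (\<theta>^(j+m) / \<theta>^m)" using t by (intro mult_left_mono) auto
    then show "?x (j + m) \<le> ?y (j + m) / \<theta>^m" by (simp add: power_mult_distrib)
  qed
  also have "\<dots> = (\<Sum>j. ?y (j + m)) / \<theta>^m" using suminf_divide[OF summable_ignore_initial_segment[OF sy]] by simp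
  also have "\<dots> \<le> exp (t*\<theta>) / \<theta>^m" using ey py th by (intro divide_right_mono) auto
  finally have "exp t - (\<Sum>k<m. ?x k) \<le> exp (t*\<theta>) / \<theta>^m" using ex by linarith
  then have "exp (-t) * (exp t - (\<Sum>k<m. ?x k)) \<le> exp (-t) * (exp (t*\<theta>) / \<theta>^m)"
    by (intro mult_left_mono) auto
  moreover have "exp (-t) * (exp t - (\<Sum>k<m. ?x k)) = 1 - exp (-t) * (\<Sum>k<m. ?x k)"
    by (simp add: right_diff_distrib exp_minus_inverse mult.commute[of "exp (-t)"])
  moreover have "exp (-t) * (exp (t*\<theta>) / \<theta>^m) = exp (t * (\<theta> - 1)) / \<theta>^m"
    by (simp add: exp_add[symmetric] algebra_simps)
  ultimately show ?thesis by linarith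
qed

lemma q_lt1: fixes s :: real assumes "0 < s" "s \<noteq> 1" shows "s * exp (1 - s) < 1"
proof -
  have "1 - (1 - s) < exp (- (1 - s))" using exp_minus_greater[of "1 - s"] assms by simp
  then have "s < exp (s - 1)" by simp
  then have "s / exp (s - 1) < 1" by simp
  moreover have "exp (1 - s) = 1 / exp (s - 1)" by (metis exp_minus inverse_eq_divide minus_diff_eq)
  ultimately show ?thesis by simp
qed

lemma alg1: assumes "0 < s" shows "exp (real n * s * (1/s - 1)) / (1/s)^(Suc n) = s * (s * exp (1 - s))^n"
proof -
  have "real n * s * (1/s - 1) = real n * (1 - s)" using assms by (simp add: field_simps)
  then have "exp (real n * s * (1/s - 1)) = exp (real n * (1 - s))" by (simp only:)
  also have "\<dots> = exp (1 - s)^n" by (rule exp_of_nat_mult)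
  finally have "exp (real n * s * (1/s - 1)) = exp (1 - s)^n" .
  then show ?thesis using assms by (simp add: power_mult_distrib field_simps)
qed

lemma alg2: assumes "0 < s" shows "exp (real n * s * (2/s - 1)) / (2/s)^(2*n) = ((s/2 * exp (1 - s/2))^2)^n"
proof -
  have "real n * s * (2/s - 1) = real n * (2 * (1 - s/2))" using assms by (simp add: field_simps)
  then have "exp (real n * s * (2/s - 1)) = exp (real n * (2 * (1 - s/2)))" by (simp only:)
  also have "\<dots> = exp (2 * (1 - s/2))^n" by (rule exp_of_nat_mult)
  also have "exp (2 * (1 - s/2)) = exp (1 - s/2)^2" by (simp add: power2_eq_square exp_add[symmetric])
  finally have "exp (real n * s * (2/s - 1)) = (exp (1 - s/2)^2)^n" .
  moreover have "(2/s)^(2*n) = ((2/s)^2)^n" by (simp add: power_mult)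
  ultimately show ?thesis using assms by (simp add: power_mult_distrib power_divide field_simps)
qed

lemma lim_nq: "0 \<le> q \<Longrightarrow> q < 1 \<Longrightarrow> (\<lambda>n. real n * q^n) \<longlonglongrightarrow> (0::real)"
  using powser_times_n_limit_0[of q] by simp

lemma err_lim:
  fixes c :: real
  assumes c: "c \<ge> 0"
  shows "(\<lambda>n. real n * (2 * (1/2)^(n^2) * exp (6 * (real n * c)))) \<longlonglongrightarrow> 0"
proof -
  let ?C = "exp (6 * c)"
  have "(\<lambda>n. (1/2::real)^n * ?C) \<longlonglongrightarrow> 0"
    by (intro tendsto_mult_left_zero LIMSEQ_power_zero) simp
  from order_tendstoD(2)[OF this, of "1/2"]
  have ev: "eventually (\<lambda>n. (1/2::real)^n * ?C < 1/2) sequentially" by simp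
  have ub: "eventually (\<lambda>n. real n * (2 * (1/2)^(n^2) * exp (6 * (real n * c))) \<le> 2 * (real n * (1/2)^n)) sequentially"
    using ev
  proof (rule eventually_mono)
    fix n assume h: "(1/2::real)^n * ?C < 1/2"
    have "exp (6 * (real n * c)) = ?C^n" by (simp add: exp_of_nat_mult[symmetric] algebra_simps)
    moreover have "(1/2::real)^(n^2) = ((1/2)^n)^n" by (simp add: power2_eq_square power_mult)
    ultimately have "(1/2)^(n^2) * exp (6 * (real n * c)) = ((1/2)^n * ?C)^n"
      by (simp add: power_mult_distrib)
    also have "\<dots> \<le> (1/2)^n" using h by (intro power_mono) auto
    finally have "(1/2)^(n^2) * exp (6 * (real n * c)) \<le> (1/2::real)^n" .
    then have "real n * ((1/2)^(n^2) * exp (6 * (real n * c))) \<le> real n * (1/2::real)^n"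
      by (intro mult_left_mono) auto
    then show "real n * (2 * (1/2)^(n^2) * exp (6 * (real n * c))) \<le> 2 * (real n * (1/2)^n)"
      by (simp only: mult.assoc mult.left_commute[of "real n"])
  qed
  have lb: "eventually (\<lambda>n. 0 \<le> real n * (2 * (1/2::real)^(n^2) * exp (6 * (real n * c)))) sequentially"
    by simp
  have "(\<lambda>n. 2 * (real n * (1/2::real)^n)) \<longlonglongrightarrow> 2 * 0"
    by (intro tendsto_mult tendsto_const lim_nq) auto
  then show ?thesis using tendsto_sandwich[OF lb ub] by simp
qed



lemma surv_approx:
  assumes n: "n \<ge> 2"
  shows "\<bar>surv n x - exp (-(max 0 x)) * Fsum n (max 0 x)\<bar> \<le> 2 * (1/2)^(n^2) * exp (6 * max 0 x)"
proof -
  let ?T = "max 0 x"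
  have a: "\<bar>matexp (gen_stopped n) (2*n) ?T 0 (2*n) - exp (-?T) * matexp (fwd n) (2*n) ?T 0 (2*n)\<bar>
      \<le> 2 * (1/2)^(n^2) * exp (6 * \<bar>?T\<bar>)" by (rule approx[OF n])
  have k: "exp (-?T) * matexp (fwd n) (2*n) ?T 0 (2*n) = 1 - exp (-?T) * Fsum n ?T" by (rule key_identity[OF n])
  have e: "surv n x - exp (-?T) * Fsum n ?T = - (matexp (gen_stopped n) (2*n) ?T 0 (2*n) - exp (-?T) * matexp (fwd n) (2*n) ?T 0 (2*n))"
    using k unfolding surv_def by simp
  have "\<bar>?T\<bar> = ?T" by simp
  then show ?thesis using a unfolding e abs_minus_cancel by simp
qed

lemma ev_lower_S1:
  fixes s :: real
  assumes "s < 1"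
  shows "eventually (\<lambda>n. 1/2 \<le> exp (- max 0 (real n * s)) * (\<Sum>k<Suc n. (max 0 (real n * s))^k / fact k)) sequentially"
proof (cases "s \<le> 0")
  case True
  show ?thesis
  proof (intro always_eventually allI)
    fix n :: nat
    have T: "max 0 (real n * s) = 0" using True by (simp add: mult_nonneg_nonpos)
    have "1 - exp (- 0) * (\<Sum>k<Suc n. (0::real)^k / fact k) \<le> exp (0 * (2 - 1)) / 2^(Suc n)"
      by (rule chern_up) auto
    moreover have "exp (0 * (2 - 1)) / 2^(Suc n) \<le> (1/2::real)"
    proof -
      have "(2::real) \<le> 2^(Suc n)" using power_increasing[of 1 "Suc n" "2::real"] by simp
      then show ?thesis by (simp add: divide_simps)
    qed
    ultimately show "1/2 \<le> exp (- max 0 (real n * s)) * (\<Sum>k<Suc n. (max 0 (real n * s))^k / fact k)"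
      unfolding T by linarith
  qed
next
  case False
  then have s0: "0 < s" by simp
  let ?q = "s * exp (1 - s)"
  have q: "0 \<le> ?q" "?q < 1" using q_lt1[of s] s0 assms by auto
  have "(\<lambda>n. ?q^n) \<longlonglongrightarrow> 0" by (rule LIMSEQ_power_zero) (use q in auto)
  from order_tendstoD(2)[OF this, of "1/2"] have ev: "eventually (\<lambda>n. ?q^n < 1/2) sequentially" by simp
  show ?thesis using ev
  proof (rule eventually_mono)
    fix n :: nat assume h: "?q^n < 1/2"
    have T: "max 0 (real n * s) = real n * s" using s0 by simp
    have "1 - exp (- (real n * s)) * (\<Sum>k<Suc n. (real n * s)^k / fact k) \<le> exp (real n * s * (1/s - 1)) / (1/s)^(Suc n)"
      by (rule chern_up) (use s0 assms in auto)
    also have "\<dots> = s * ?q^n" by (rule alg1[OF s0])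
    also have "\<dots> \<le> ?q^n" using assms q s0 by (intro mult_left_le_one_le) auto
    finally show "1/2 \<le> exp (- max 0 (real n * s)) * (\<Sum>k<Suc n. (max 0 (real n * s))^k / fact k)"
      unfolding T using h by linarith
  qed
qed

theorem lemma3p4:
  fixes s :: real
  shows "(s < 1 \<longrightarrow> filterlim (\<lambda>n. real n * surv n (real n * s)) at_top sequentially)
       \<and> (1 < s \<and> s < 2 \<longrightarrow> (\<lambda>n. real n * surv n (real n * s)) \<longlonglongrightarrow> 1)
       \<and> (2 < s \<longrightarrow> (\<lambda>n. real n * surv n (real n * s)) \<longlonglongrightarrow> 0)"
proof -
  define T where "T n = max 0 (real n * s)" for n
  define E where "E n = exp (- T n) * Fsum n (T n)" for n
  define D where "D n = real n * surv n (real n * s) - real n * E n" for n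
  have T0: "0 \<le> T n" for n by (simp add: T_def)
  have G: "real n * surv n (real n * s) = real n * E n + D n" for n by (simp add: D_def)
  have D0: "D \<longlonglongrightarrow> 0"
  proof -
    have bnd: "eventually (\<lambda>n. \<bar>D n\<bar> \<le> real n * (2 * (1/2)^(n^2) * exp (6 * (real n * \<bar>s\<bar>)))) sequentially"
      using eventually_ge_at_top[of 2]
    proof (rule eventually_mono)
      fix n :: nat assume n: "2 \<le> n"
      have "\<bar>D n\<bar> = real n * \<bar>surv n (real n * s) - E n\<bar>"
        by (simp add: D_def abs_mult right_diff_distrib[symmetric])
      also have "\<dots> \<le> real n * (2 * (1/2)^(n^2) * exp (6 * T n))"
        using surv_approx[OF n, of "real n * s"] by (intro mult_left_mono) (auto simp: E_def T_def)
      also have "\<dots> \<le> real n * (2 * (1/2)^(n^2) * exp (6 * (real n * \<bar>s\<bar>)))"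
      proof -
        have "T n \<le> real n * \<bar>s\<bar>" unfolding T_def
          by (cases "s < 0") (auto simp: mult_nonneg_nonpos)
        then show ?thesis by (intro mult_left_mono) auto
      qed
      finally show "\<bar>D n\<bar> \<le> real n * (2 * (1/2)^(n^2) * exp (6 * (real n * \<bar>s\<bar>)))" .
    qed
    have "(\<lambda>n. \<bar>D n\<bar>) \<longlonglongrightarrow> 0"
      by (rule tendsto_sandwich[OF _ bnd tendsto_const err_lim]) auto
    then show ?thesis by (rule tendsto_rabs_zero_cancel)
  qed
  have part1: "filterlim (\<lambda>n. real n * surv n (real n * s)) at_top sequentially" if s1: "s < 1"
  proof -
    have evE: "eventually (\<lambda>n. 1/2 \<le> E n) sequentially"
      using eventually_conj[OF ev_lower_S1[OF s1] eventually_ge_at_top[of 2]]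
    proof (rule eventually_mono)
      fix n :: nat assume h: "1/2 \<le> exp (- max 0 (real n * s)) * (\<Sum>k<Suc n. (max 0 (real n * s))^k / fact k) \<and> 2 \<le> n"
      have "exp (- T n) * (\<Sum>k<Suc n. (T n)^k / fact k) \<le> E n"
        unfolding E_def using F_bounds(1)[of n "T n"] h T0 by (intro mult_left_mono) auto
      then show "1/2 \<le> E n" using h unfolding T_def by linarith
    qed
    have evD: "eventually (\<lambda>n. \<bar>D n\<bar> < 1) sequentially"
      using order_tendstoD(2)[OF tendsto_rabs[OF D0], of 1] by simp
    have ev: "eventually (\<lambda>n. (-1) + 1/2 * real n \<le> real n * surv n (real n * s)) sequentially"
      using eventually_conj[OF evE evD]
    proof (rule eventually_mono)
      fix n assume h: "1/2 \<le> E n \<and> \<bar>D n\<bar> < 1"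
      have "real n * (1/2) \<le> real n * E n" using h by (intro mult_left_mono) auto
      then have "1/2 * real n \<le> real n * E n" by (simp add: mult.commute)
      then show "(-1) + 1/2 * real n \<le> real n * surv n (real n * s)" unfolding G using h by linarith
    qed
    have lim: "filterlim (\<lambda>n. (-1) + 1/2 * real n) at_top sequentially"
      by (intro filterlim_tendsto_add_at_top[OF tendsto_const] filterlim_tendsto_pos_mult_at_top[OF tendsto_const]
          filterlim_real_sequentially) auto
    show ?thesis by (rule filterlim_at_top_mono[OF lim ev])
  qed
  have part2: "(\<lambda>n. real n * surv n (real n * s)) \<longlonglongrightarrow> 1" if s12: "1 < s" "s < 2"
  proof -
    have s0: "0 < s" using s12 by simp
    have Tn: "T n = real n * s" for n using s0 by (simp add: T_def)
    let ?q = "s * exp (1 - s)" and ?Q = "(s/2 * exp (1 - s/2))^2"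
    have q: "0 \<le> ?q" "?q < 1" using q_lt1[of s] s12 by auto
    have q2: "0 \<le> s/2 * exp (1 - s/2)" "s/2 * exp (1 - s/2) < 1" using q_lt1[of "s/2"] s12 by auto
    have Q: "0 \<le> ?Q" "?Q < 1"
      using mult_strict_mono[OF q2(2) q2(2)] q2(1) by (auto simp: power2_eq_square)
    have low: "eventually (\<lambda>n. 1 - ?Q^n \<le> real n * E n) sequentially"
      using eventually_ge_at_top[of 2]
    proof (rule eventually_mono)
      fix n :: nat assume n: "2 \<le> n"
      have "1 - exp (- (real n * s)) * (\<Sum>k<2*n. (real n * s)^k / fact k) \<le> exp (real n * s * (2/s - 1)) / (2/s)^(2*n)"
        by (rule chern_up) (use s12 in auto)
      also have "\<dots> = ?Q^n" by (rule alg2[OF s0])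
      finally have a: "1 - exp (- T n) * (\<Sum>k<2*n. (T n)^k / fact k) \<le> ?Q^n" unfolding Tn .
      have "real n * (exp (- T n) * (1/real n * (\<Sum>k<2*n. (T n)^k / fact k))) \<le> real n * E n"
        unfolding E_def using F_bounds(2)[OF n T0[of n]] by (intro mult_left_mono) auto
      moreover have "real n * (exp (- T n) * (1/real n * (\<Sum>k<2*n. (T n)^k / fact k))) = exp (- T n) * (\<Sum>k<2*n. (T n)^k / fact k)"
        using n by (simp add: field_simps)
      ultimately show "1 - ?Q^n \<le> real n * E n" using a by linarith
    qed
    have up: "eventually (\<lambda>n. real n * E n \<le> s * (real n * ?q^n) + 1) sequentially"
      using eventually_ge_at_top[of 2]
    proof (rule eventually_mono)
      fix n :: nat assume n: "2 \<le> n"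
      have "exp (- (real n * s)) * (\<Sum>k<Suc n. (real n * s)^k / fact k) \<le> exp (real n * s * (1/s - 1)) / (1/s)^(Suc n)"
        by (rule chern_low) (use s12 in auto)
      also have "\<dots> = s * ?q^n" by (rule alg1[OF s0])
      finally have a: "exp (- T n) * (\<Sum>k<Suc n. (T n)^k / fact k) \<le> s * ?q^n" unfolding Tn .
      have "exp (- (real n * s)) * (\<Sum>k<2*n. (real n * s)^k / fact k) \<le> exp (real n * s * (1 - 1)) / 1^(2*n)"
        by (rule chern_low) (use s12 in auto)
      then have b: "exp (- T n) * (\<Sum>k<2*n. (T n)^k / fact k) \<le> 1" unfolding Tn by simp
      have "real n * E n \<le> real n * (exp (- T n) * ((\<Sum>k<Suc n. (T n)^k / fact k) + 1/real n * (\<Sum>k<2*n. (T n)^k / fact k)))"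
        unfolding E_def using F_bounds(4)[OF n T0[of n]] by (intro mult_left_mono) auto
      also have "\<dots> = real n * (exp (- T n) * (\<Sum>k<Suc n. (T n)^k / fact k)) + exp (- T n) * (\<Sum>k<2*n. (T n)^k / fact k)"
        using n by (simp add: field_simps)
      also have "\<dots> \<le> real n * (s * ?q^n) + 1"
        using a b by (intro add_mono mult_left_mono) auto
      finally show "real n * E n \<le> s * (real n * ?q^n) + 1" by (simp add: algebra_simps)
    qed
    have l1: "(\<lambda>n. 1 - ?Q^n) \<longlonglongrightarrow> 1 - 0"
      by (intro tendsto_diff tendsto_const LIMSEQ_power_zero) (use Q in auto)
    have l2: "(\<lambda>n. s * (real n * ?q^n) + 1) \<longlonglongrightarrow> s * 0 + 1"
      by (intro tendsto_add tendsto_mult tendsto_const lim_nq) (use q in auto)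
    have "(\<lambda>n. real n * E n) \<longlonglongrightarrow> 1"
      by (rule tendsto_sandwich[OF low up]) (use l1 l2 in auto)
    then have "(\<lambda>n. real n * E n + D n) \<longlonglongrightarrow> 1 + 0" by (intro tendsto_add D0)
    then show ?thesis unfolding G by simp
  qed
  have part3: "(\<lambda>n. real n * surv n (real n * s)) \<longlonglongrightarrow> 0" if s2: "2 < s"
  proof -
    have s0: "0 < s" using s2 by simp
    have Tn: "T n = real n * s" for n using s0 by (simp add: T_def)
    let ?Q = "(s/2 * exp (1 - s/2))^2"
    have q2: "0 \<le> s/2 * exp (1 - s/2)" "s/2 * exp (1 - s/2) < 1" using q_lt1[of "s/2"] s2 by auto
    have Q: "0 \<le> ?Q" "?Q < 1"
      using mult_strict_mono[OF q2(2) q2(2)] q2(1) by (auto simp: power2_eq_square)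
    have low: "eventually (\<lambda>n. 0 \<le> real n * E n) sequentially"
      using eventually_ge_at_top[of 2]
    proof (rule eventually_mono)
      fix n :: nat assume n: "2 \<le> n"
      have "0 \<le> (\<Sum>k<Suc n. (T n)^k / fact k)" using T0 by (intro sum_nonneg) auto
      then have "0 \<le> Fsum n (T n)" using F_bounds(1)[OF n T0[of n]] by linarith
      then show "0 \<le> real n * E n" by (simp add: E_def)
    qed
    have up: "eventually (\<lambda>n. real n * E n \<le> real n * ?Q^n) sequentially"
      using eventually_ge_at_top[of 2]
    proof (rule eventually_mono)
      fix n :: nat assume n: "2 \<le> n"
      have "exp (- (real n * s)) * (\<Sum>k<2*n. (real n * s)^k / fact k) \<le> exp (real n * s * (2/s - 1)) / (2/s)^(2*n)"
        by (rule chern_low) (use s2 in auto)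
      also have "\<dots> = ?Q^n" by (rule alg2[OF s0])
      finally have a: "exp (- T n) * (\<Sum>k<2*n. (T n)^k / fact k) \<le> ?Q^n" unfolding Tn .
      have "E n \<le> exp (- T n) * (\<Sum>k<2*n. (T n)^k / fact k)"
        unfolding E_def using F_bounds(3)[OF n T0[of n]] by (intro mult_left_mono) auto
      then show "real n * E n \<le> real n * ?Q^n" using a by (intro mult_left_mono) auto
    qed
    have "(\<lambda>n. real n * E n) \<longlonglongrightarrow> 0"
      by (rule tendsto_sandwich[OF low up tendsto_const lim_nq]) (use Q in auto)
    then have "(\<lambda>n. real n * E n + D n) \<longlonglongrightarrow> 0 + 0" by (intro tendsto_add D0)
    then show ?thesis unfolding G by simp
  qed
  show ?thesis using part1 part2 part3 by blast
qed

end
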